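(* For every $\eta\in(0,1]$ and $b\in\mathbb{N}$ there exists $a_0$ such that for every integer $a\ge a_0$ there exists $\nu_0>0$ such that for every $\nu\in(0,\nu_0]$ there exists $\mu_0>0$ such that for every $\mu\in(0,\mu_0]$ there exists $n_0$ such that for all $n\ge n_0$ the following holds. Let $m\in\mathbb{N}$ and let $C_1,\dots,C_m$ be finite multisets of elements of $\mathbb{N}$ such that (S1) $\nu n\le |C_i|\le n$ for every $i\in[m]$; (S2) $\sum_{i=1}^m \mathrm{mult}(t,C_i)\le \mu n$ for every $t\in\mathbb{N}$. Let $\ell\in\mathbb{N}$ and let $U_1,\dots,U_\ell\subseteq\mathbb{N}$ be pairwise disjoint sets with $|U_k|=a$ for all $k$, and $U=\bigcup_{k=1}^\ell U_k$. Then there exists $T\subseteq U$ such that (T1) $|T\cap U_k|\ge b$ for every $k\in[\ell]$; (T2) $|C_i\setminus^+ T|\ge (1-\eta)|C_i|$ for every $i\in[m]$.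
   Context: For a multiset $C$ and $t\in\mathbb{N}$, $\mathrm{mult}(t,C)$ is the multiplicity of $t$ in $C$; $|C|$ is the size counted with multiplicity. For a set $T$, $C\setminus^+T$ is the multiset obtained from $C$ by removing all copies of all elements of $T$. *)

theory Defs
  imports Complex_Main "HOL-Library.Multiset"
begin

definition mset_remove_set :: "'a multiset \<Rightarrow> 'a set \<Rightarrow> 'a multiset" where
  "mset_remove_set C T = filter_mset (\<lambda>x. x \<notin> T) C"

end

theory Submission
  imports Defs
begin

lemma size_filter_in:
  assumes "finite T"
  shows "size (filter_mset (\<lambda>x. x \<in> T) M) = (\<Sum>t\<in>T. count M t)"
proof -
  have "size (filter_mset (\<lambda>x. x \<in> T) M) = (\<Sum>t\<in>set_mset M \<inter> T. count (filter_mset (\<lambda>x. x \<in> T) M) t)"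
    by (simp add: size_multiset_overloaded_eq, rule sum.cong, auto)
  also have "\<dots> = (\<Sum>t\<in>set_mset M \<inter> T. count M t)" by simp
  also have "\<dots> = (\<Sum>t\<in>T. count M t)"
    by (rule sum.mono_neutral_left) (auto simp: assms count_eq_zero_iff)
  finally show ?thesis .
qed

lemma sum_count_le_size:
  assumes "finite T"
  shows "(\<Sum>t\<in>T. count M t) \<le> size M"
  using size_filter_in[OF assms, of M] size_filter_mset_lesseq by metis

lemma size_remove:
  assumes "finite T"
  shows "size (filter_mset (\<lambda>x. x \<notin> T) M) + (\<Sum>t\<in>T. count M t) = size M"
proof -
  have "size M = size (filter_mset (\<lambda>x. x \<in> T) M) + size (filter_mset (\<lambda>x. x \<notin> T) M)"
    by (metis multiset_partition size_union)
  thus ?thesis using size_filter_in[OF assms] by simp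
qed

lemma kernel:
  fixes g :: "'j \<Rightarrow> nat \<Rightarrow> real"
  assumes "finite J" "finite F" "card J < card F"
  shows "\<exists>y. (\<forall>t. t \<notin> F \<longrightarrow> y t = 0) \<and> (\<exists>t\<in>F. y t \<noteq> 0) \<and> (\<forall>j\<in>J. (\<Sum>t\<in>F. g j t * y t) = 0)"
  using assms
proof (induction J arbitrary: F g rule: finite_induct)
  case empty
  then obtain t0 where "t0 \<in> F" by fastforce
  then show ?case by (intro exI[of _ "\<lambda>t. if t = t0 then 1 else 0"]) auto
next
  case (insert j J)
  show ?case
  proof (cases "\<forall>t\<in>F. g j t = 0")
    case True
    from insert.IH[of F g] insert.prems insert.hyps obtain y where
      y: "\<forall>t. t \<notin> F \<longrightarrow> y t = 0" "\<exists>t\<in>F. y t \<noteq> 0" "\<forall>j\<in>J. (\<Sum>t\<in>F. g j t * y t) = 0"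
      by auto
    thus ?thesis using True by (intro exI[of _ y]) auto
  next
    case False
    then obtain s where s: "s \<in> F" "g j s \<noteq> 0" by auto
    define F' where "F' = F - {s}"
    define g' where "g' = (\<lambda>j' t. g j' t - g j' s * g j t / g j s)"
    have cF': "card F' = card F - 1" using s insert.prems by (simp add: F'_def)
    have "card J < card F'" using cF' insert.prems insert.hyps by simp
    with insert.IH[of F' g'] insert.prems obtain y' where
      y': "\<forall>t. t \<notin> F' \<longrightarrow> y' t = 0" "\<exists>t\<in>F'. y' t \<noteq> 0" "\<forall>j\<in>J. (\<Sum>t\<in>F'. g' j t * y' t) = 0"
      by (auto simp: F'_def)
    define y where "y = (\<lambda>t. if t = s then - (\<Sum>t\<in>F'. g j t * y' t) / g j s else y' t)"
    have split: "(\<Sum>t\<in>F. h t * y t) = h s * y s + (\<Sum>t\<in>F'. h t * y' t)" for h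
    proof -
      have "(\<Sum>t\<in>F. h t * y t) = h s * y s + (\<Sum>t\<in>F'. h t * y t)"
        using s insert.prems by (simp add: F'_def sum.remove)
      also have "(\<Sum>t\<in>F'. h t * y t) = (\<Sum>t\<in>F'. h t * y' t)"
        by (rule sum.cong) (auto simp: y_def F'_def)
      finally show ?thesis .
    qed
    have A: "\<forall>t. t \<notin> F \<longrightarrow> y t = 0" using y'(1) s by (auto simp: y_def F'_def)
    have B: "\<exists>t\<in>F. y t \<noteq> 0" using y'(2) by (auto simp: y_def F'_def)
    have C: "(\<Sum>t\<in>F. g j t * y t) = 0" unfolding split using s(2) by (simp add: y_def)
    have D: "(\<Sum>t\<in>F. g j' t * y t) = 0" if "j' \<in> J" for j'
    proof -
      have "0 = (\<Sum>t\<in>F'. g' j' t * y' t)" using y'(3) that by auto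
      also have "\<dots> = (\<Sum>t\<in>F'. g j' t * y' t) - g j' s / g j s * (\<Sum>t\<in>F'. g j t * y' t)"
        by (simp add: g'_def algebra_simps sum_subtractf sum_distrib_left)
      finally have e: "(\<Sum>t\<in>F'. g j' t * y' t) = g j' s / g j s * (\<Sum>t\<in>F'. g j t * y' t)" by simp
      show ?thesis unfolding split using e s(2) by (simp add: y_def)
    qed
    show ?thesis using A B C D by (intro exI[of _ y]) auto
  qed
qed

lemma sum_ind_card:
  assumes "finite A"
  shows "(\<Sum>t\<in>A. if P t then (1::real) else 0) = real (card {t\<in>A. P t})"
proof -
  have "(\<Sum>t\<in>A. if P t then (1::real) else 0) = (\<Sum>t\<in>A. of_bool (P t))"
    by (rule sum.cong) auto
  also have "\<dots> = real (card (A \<inter> {x. P x}))" using assms by simp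
  also have "A \<inter> {x. P x} = {t\<in>A. P t}" by auto
  finally show ?thesis .
qed

lemma rounding:
  fixes U :: "'k \<Rightarrow> nat set" and w :: "'i \<Rightarrow> nat \<Rightarrow> real" and x0 :: "nat \<Rightarrow> real"
  assumes fK: "finite K" and fI: "finite I" and fU: "\<forall>k\<in>K. finite (U k)"
    and disj: "\<forall>k\<in>K. \<forall>k'\<in>K. k \<noteq> k' \<longrightarrow> U k \<inter> U k' = {}"
    and wnn: "\<forall>i t. 0 \<le> w i t" and wsum: "\<forall>t. (\<Sum>i\<in>I. w i t) \<le> \<delta>" and dpos: "\<delta> > 0"
    and x0supp: "\<forall>t. t \<notin> (\<Union>k\<in>K. U k) \<longrightarrow> x0 t = 0"
    and x0b: "\<forall>t. 0 \<le> x0 t \<and> x0 t \<le> 1"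
    and x0part: "\<forall>k\<in>K. (\<Sum>t\<in>U k. x0 t) = real b"
    and x0w: "\<forall>i\<in>I. (\<Sum>t\<in>(\<Union>k\<in>K. U k). w i t * x0 t) \<le> Bd"
  shows "\<exists>T \<subseteq> (\<Union>k\<in>K. U k). (\<forall>k\<in>K. card (T \<inter> U k) = b) \<and> (\<forall>i\<in>I. (\<Sum>t\<in>T. w i t) \<le> Bd + 4*\<delta>)"
proof -
  define UU where "UU = (\<Union>k\<in>K. U k)"
  have fUU: "finite UU" using fK fU by (auto simp: UU_def)
  have UkUU: "U k \<subseteq> UU" if "k \<in> K" for k using that by (auto simp: UU_def)
  define X where "X = {x. (\<forall>t. t \<notin> UU \<longrightarrow> x t = 0) \<and> (\<forall>t. 0 \<le> x t \<and> x t \<le> 1)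
      \<and> (\<forall>k\<in>K. (\<Sum>t\<in>U k. x t) = real b)
      \<and> (\<forall>i\<in>I. (\<Sum>t\<in>UU. w i t * x t) \<le> Bd \<or> (\<Sum>t\<in>{t\<in>UU. x t \<noteq> 0}. w i t) \<le> Bd + 4*\<delta>)}"
  define Fl where "Fl x = {t\<in>UU. 0 < x t \<and> x t < 1}" for x :: "nat \<Rightarrow> real"
  have "x0 \<in> X" using x0supp x0b x0part x0w by (auto simp: X_def UU_def)
  then obtain x where xX: "x \<in> X" and xmin: "\<forall>x'. x' \<in> X \<longrightarrow> card (Fl x) \<le> card (Fl x')"
    using ex_has_least_nat[of "\<lambda>x. x \<in> X" x0 "\<lambda>x. card (Fl x)"] by blast
  have xsupp: "\<forall>t. t \<notin> UU \<longrightarrow> x t = 0" and xb: "\<forall>t. 0 \<le> x t \<and> x t \<le> 1"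
    and xpart: "\<forall>k\<in>K. (\<Sum>t\<in>U k. x t) = real b"
    and xw: "\<forall>i\<in>I. (\<Sum>t\<in>UU. w i t * x t) \<le> Bd \<or> (\<Sum>t\<in>{t\<in>UU. x t \<noteq> 0}. w i t) \<le> Bd + 4*\<delta>"
    using xX by (auto simp: X_def)
  have Fe: "Fl x = {}"
  proof (rule ccontr)
    assume Fne: "Fl x \<noteq> {}"
    define F where "F = Fl x"
    have FU: "F \<subseteq> UU" by (auto simp: F_def Fl_def)
    have fF: "finite F" using FU fUU finite_subset by blast
    have Fx: "0 < x t \<and> x t < 1" if "t \<in> F" for t using that by (auto simp: F_def Fl_def)
    have nF01: "x t = 0 \<or> x t = 1" if "t \<in> UU" "t \<notin> F" for t
      using that xb[rule_format, of t] by (auto simp: F_def Fl_def)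
    define Kp where "Kp = {k\<in>K. U k \<inter> F \<noteq> {}}"
    define Act where "Act = {i\<in>I. (\<Sum>t\<in>F. w i t) > 4*\<delta>}"
    define J :: "('k + 'i) set" where "J = Inl ` Kp \<union> Inr ` Act"
    define g where "g j t = (case j of Inl k \<Rightarrow> if t \<in> U k then 1 else 0 | Inr i \<Rightarrow> w i t)" for j t
    have fKp: "finite Kp" using fK by (auto simp: Kp_def)
    have fAct: "finite Act" using fI by (auto simp: Act_def)
    have fJ: "finite J" using fKp fAct by (auto simp: J_def)
    have cJ: "card J = card Kp + card Act"
      unfolding J_def
      by (subst card_Un_disjoint) (auto simp: fKp fAct card_image inj_on_def)
    have each: "2 \<le> card (U k \<inter> F)" if "k \<in> Kp" for k
    proof (rule ccontr)
      assume "\<not> 2 \<le> card (U k \<inter> F)"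
      moreover have "U k \<inter> F \<noteq> {}" "finite (U k \<inter> F)" using that fF by (auto simp: Kp_def)
      ultimately have "card (U k \<inter> F) = 1"
        using card_gt_0_iff[of "U k \<inter> F"] by linarith
      then obtain s where s: "U k \<inter> F = {s}" using card_1_singletonE by blast
      have kK: "k \<in> K" using that by (auto simp: Kp_def)
      have sU: "s \<in> U k" "s \<in> F" using s by auto
      have fUk: "finite (U k)" using fU kK by auto
      have "real b = (\<Sum>t\<in>U k. x t)" using xpart kK by auto
      also have "\<dots> = x s + (\<Sum>t\<in>U k - {s}. x t)" using sU fUk by (simp add: sum.remove)
      also have "(\<Sum>t\<in>U k - {s}. x t) = (\<Sum>t\<in>U k - {s}. if x t = 1 then 1 else 0)"
      proof (rule sum.cong)
        fix t assume t: "t \<in> U k - {s}"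
        then have "t \<notin> F" "t \<in> UU" using s UkUU[OF kK] by auto
        then show "x t = (if x t = 1 then 1 else 0)" using nF01 by auto
      qed simp
      also have "\<dots> = real (card {t\<in>U k - {s}. x t = 1})" using fUk by (simp add: sum_ind_card)
      finally have eq: "x s = real b - real (card {t\<in>U k - {s}. x t = 1})" by simp
      have "0 < x s" "x s < 1" using Fx sU by auto
      with eq show False
        by (cases "b \<le> card {t\<in>U k - {s}. x t = 1}") (auto simp: not_le)
    qed
    have two: "2 * card Kp \<le> card F"
    proof -
      have "2 * card Kp = (\<Sum>k\<in>Kp. 2)" by simp
      also have "\<dots> \<le> (\<Sum>k\<in>Kp. card (U k \<inter> F))" using each by (intro sum_mono) auto
      also have "\<dots> = card (\<Union>k\<in>Kp. U k \<inter> F)"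
        using fF disj fKp by (subst card_UN_disjoint) (auto simp: Kp_def)
      also have "\<dots> \<le> card F" using fF by (intro card_mono) auto
      finally show ?thesis .
    qed
    have four: "4 * card Act < card F" if "Act \<noteq> {}"
    proof -
      have "real (card Act) * (4*\<delta>) = (\<Sum>i\<in>Act. 4*\<delta>)" by simp
      also have "\<dots> < (\<Sum>i\<in>Act. \<Sum>t\<in>F. w i t)"
        using that fAct by (intro sum_strict_mono) (auto simp: Act_def)
      also have "\<dots> \<le> (\<Sum>i\<in>I. \<Sum>t\<in>F. w i t)"
        using fI wnn by (intro sum_mono2) (auto simp: Act_def intro: sum_nonneg)
      also have "\<dots> = (\<Sum>t\<in>F. \<Sum>i\<in>I. w i t)" by (rule sum.swap)
      also have "\<dots> \<le> (\<Sum>t\<in>F. \<delta>)" using wsum by (intro sum_mono) auto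
      also have "\<dots> = real (card F) * \<delta>" by simp
      finally have "real (4 * card Act) * \<delta> < real (card F) * \<delta>" by (simp add: algebra_simps)
      then have "real (4 * card Act) < real (card F)" using dpos by (simp add: mult_less_cancel_right)
      then show ?thesis by linarith
    qed
    have cF: "card F > 0" using Fne fF by (auto simp: F_def card_gt_0_iff)
    have cJF: "card J < card F"
    proof (cases "Act = {}")
      case True then show ?thesis using cJ two cF by simp
    next
      case False then show ?thesis using cJ two four[OF False] by simp
    qed
    obtain y where y0: "\<forall>t. t \<notin> F \<longrightarrow> y t = 0" and ynz: "\<exists>t\<in>F. y t \<noteq> 0"
      and yJ: "\<forall>j\<in>J. (\<Sum>t\<in>F. g j t * y t) = 0"
      using kernel[OF fJ fF cJF, of g] by blast
    have ypart: "(\<Sum>t\<in>U k. y t) = 0" if kK: "k \<in> K" for k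
    proof -
      have fUk: "finite (U k)" using fU kK by auto
      have "(\<Sum>t\<in>U k. y t) = (\<Sum>t\<in>U k \<inter> F. y t)"
        using fUk y0 by (intro sum.mono_neutral_right) auto
      also have "\<dots> = (\<Sum>t\<in>F. g (Inl k) t * y t)"
        using fF by (simp add: g_def sum.inter_restrict Int_commute, intro sum.cong, auto)
      also have "\<dots> = 0"
      proof (cases "k \<in> Kp")
        case True then show ?thesis using yJ by (auto simp: J_def)
      next
        case False
        then have "U k \<inter> F = {}" using kK by (auto simp: Kp_def)
        then have "\<forall>t\<in>F. g (Inl k) t * y t = 0" by (auto simp: g_def)
        then show ?thesis by (intro sum.neutral) blast
      qed
      finally show ?thesis .
    qed
    have yw: "(\<Sum>t\<in>UU. w i t * y t) = 0" if "i \<in> Act" for i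
    proof -
      have "(\<Sum>t\<in>UU. w i t * y t) = (\<Sum>t\<in>F. w i t * y t)"
        using fUU FU y0 by (intro sum.mono_neutral_right) auto
      also have "\<dots> = (\<Sum>t\<in>F. g (Inr i) t * y t)" by (simp add: g_def)
      also have "\<dots> = 0" using yJ that by (auto simp: J_def)
      finally show ?thesis .
    qed
    define Y where "Y = {t\<in>F. y t \<noteq> 0}"
    have fY: "finite Y" and Yne: "Y \<noteq> {}" using fF ynz by (auto simp: Y_def)
    define r where "r t = (if y t > 0 then (1 - x t) / y t else x t / (- y t))" for t
    have rpos: "r t > 0" if "t \<in> Y" for t
      using that Fx[of t] by (auto simp: Y_def r_def divide_pos_neg)
    define lam where "lam = Min (r ` Y)"
    have lampos: "lam > 0" using fY Yne rpos by (auto simp: lam_def)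
    have lamle: "lam \<le> r t" if "t \<in> Y" for t using fY that by (auto simp: lam_def)
    have "lam \<in> r ` Y" using Min_in[of "r ` Y"] fY Yne by (simp add: lam_def)
    then obtain s where sY: "s \<in> Y" and rs: "r s = lam" by auto
    define x' where "x' t = x t + lam * y t" for t
    have x'b: "0 \<le> x' t \<and> x' t \<le> 1" for t
    proof (cases "y t = 0")
      case True then show ?thesis using xb by (simp add: x'_def)
    next
      case False
      then have tY: "t \<in> Y" using y0 by (auto simp: Y_def)
      have x01: "0 < x t" "x t < 1" using tY Fx by (auto simp: Y_def)
      have le: "lam \<le> r t" using lamle tY by auto
      show ?thesis
      proof (cases "y t > 0")
        case True
        then have "lam * y t \<le> 1 - x t" using le by (simp add: r_def pos_le_divide_eq)
        moreover have "0 \<le> lam * y t" using True lampos by simp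
        ultimately show ?thesis using x01 by (simp add: x'_def)
      next
        case False
        then have yn: "y t < 0" using \<open>y t \<noteq> 0\<close> by simp
        have "lam \<le> x t / (- y t)" using le False by (simp add: r_def)
        moreover have c: "0 < - y t" using yn by simp
        ultimately have "lam * (- y t) \<le> x t" using pos_le_divide_eq[OF c] by blast
        moreover have "lam * y t \<le> 0" using yn lampos by (simp add: mult_nonneg_nonpos)
        ultimately show ?thesis using x01 by (simp add: x'_def algebra_simps)
      qed
    qed
    have s01: "x' s = 0 \<or> x' s = 1"
    proof (cases "y s > 0")
      case True
      then have "lam = (1 - x s) / y s" using rs by (simp add: r_def)
      then show ?thesis using True by (simp add: x'_def)
    next
      case False
      then have "y s \<noteq> 0" "lam = x s / (- y s)" using sY rs by (auto simp: Y_def r_def)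
      then show ?thesis by (simp add: x'_def)
    qed
    have supp_mono: "{t\<in>UU. x' t \<noteq> 0} \<subseteq> {t\<in>UU. x t \<noteq> 0}"
    proof
      fix t assume "t \<in> {t\<in>UU. x' t \<noteq> 0}"
      moreover have "x t = 0 \<Longrightarrow> x' t = 0" using Fx[of t] y0 by (force simp: x'_def)
      ultimately show "t \<in> {t\<in>UU. x t \<noteq> 0}" by auto
    qed
    have x'X: "x' \<in> X"
      unfolding X_def
    proof (intro CollectI conjI allI ballI impI)
      fix t assume "t \<notin> UU" then show "x' t = 0" using FU y0 xsupp by (auto simp: x'_def)
    next
      fix t show "0 \<le> x' t" "x' t \<le> 1" using x'b by auto
    next
      fix k assume kK: "k \<in> K"
      have "(\<Sum>t\<in>U k. x' t) = (\<Sum>t\<in>U k. x t) + lam * (\<Sum>t\<in>U k. y t)"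
        by (simp add: x'_def sum.distrib sum_distrib_left)
      then show "(\<Sum>t\<in>U k. x' t) = real b" using ypart[OF kK] xpart kK by simp
    next
      fix i assume iI: "i \<in> I"
      show "(\<Sum>t\<in>UU. w i t * x' t) \<le> Bd \<or> (\<Sum>t\<in>{t\<in>UU. x' t \<noteq> 0}. w i t) \<le> Bd + 4*\<delta>"
      proof (cases "i \<in> Act \<and> (\<Sum>t\<in>UU. w i t * x t) \<le> Bd")
        case True
        have "(\<Sum>t\<in>UU. w i t * x' t) = (\<Sum>t\<in>UU. w i t * x t) + lam * (\<Sum>t\<in>UU. w i t * y t)"
          by (simp add: x'_def algebra_simps sum.distrib sum_distrib_left)
        then show ?thesis using True yw by simp
      next
        case False
        define S where "S = {t\<in>UU. x t \<noteq> 0}"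
        have FS: "F \<subseteq> S" using FU Fx by (force simp: S_def)
        have fS: "finite S" using fUU by (auto simp: S_def)
        have "(\<Sum>t\<in>S. w i t) \<le> Bd + 4*\<delta>"
        proof (cases "(\<Sum>t\<in>S. w i t) \<le> Bd + 4*\<delta>")
          case False
          then have first: "(\<Sum>t\<in>UU. w i t * x t) \<le> Bd" using xw iI by (auto simp: S_def)
          then have nA: "i \<notin> Act" using \<open>\<not> (i \<in> Act \<and> (\<Sum>t\<in>UU. w i t * x t) \<le> Bd)\<close> by auto
          then have phi: "(\<Sum>t\<in>F. w i t) \<le> 4*\<delta>" using iI by (auto simp: Act_def)
          have "(\<Sum>t\<in>S. w i t) = (\<Sum>t\<in>S - F. w i t) + (\<Sum>t\<in>F. w i t)"
            using fS FS by (simp add: sum.subset_diff)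
          also have "(\<Sum>t\<in>S - F. w i t) = (\<Sum>t\<in>S - F. w i t * x t)"
          proof (rule sum.cong)
            fix t assume "t \<in> S - F"
            then have "x t = 1" using nF01[of t] by (auto simp: S_def)
            then show "w i t = w i t * x t" by simp
          qed simp
          also have "\<dots> \<le> (\<Sum>t\<in>UU. w i t * x t)"
            using fUU wnn xb by (intro sum_mono2) (auto simp: S_def)
          finally show ?thesis using first phi by simp
        qed simp
        then have "(\<Sum>t\<in>{t\<in>UU. x' t \<noteq> 0}. w i t) \<le> Bd + 4*\<delta>"
          using sum_mono2[OF fS supp_mono[folded S_def], of "w i"] wnn by auto
        then show ?thesis by simp
      qed
    qed
    have sub: "Fl x' \<subset> Fl x"
    proof
      show "Fl x' \<subseteq> Fl x"
      proof
        fix t assume t: "t \<in> Fl x'"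
        show "t \<in> Fl x"
        proof (cases "t \<in> F")
          case True then show ?thesis by (simp add: F_def)
        next
          case False then have "x' t = x t" using y0 by (simp add: x'_def)
          then show ?thesis using t by (simp add: Fl_def)
        qed
      qed
      have "s \<in> Fl x" using sY by (simp add: Y_def F_def)
      moreover have "s \<notin> Fl x'" using s01 by (auto simp: Fl_def)
      ultimately show "Fl x' \<noteq> Fl x" by blast
    qed
    have "finite (Fl x)" using fF by (simp add: F_def)
    then have "card (Fl x') < card (Fl x)" using sub psubset_card_mono by blast
    with xmin x'X show False by fastforce
  qed
  have x01: "x t = 0 \<or> x t = 1" if "t \<in> UU" for t
  proof -
    have "t \<notin> Fl x" using Fe by simp
    then show ?thesis using that xb[rule_format, of t] by (auto simp: Fl_def)
  qed
  define T where "T = {t\<in>UU. x t = 1}"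
  have TS: "{t\<in>UU. x t \<noteq> 0} = T" using x01 by (auto simp: T_def)
  have wT: "(\<Sum>t\<in>UU. w i t * x t) = (\<Sum>t\<in>T. w i t)" for i
  proof -
    have "(\<Sum>t\<in>UU. w i t * x t) = (\<Sum>t\<in>UU. if t \<in> T then w i t else 0)"
      by (rule sum.cong) (use x01 in \<open>auto simp: T_def\<close>)
    also have "\<dots> = (\<Sum>t\<in>UU \<inter> T. w i t)" using fUU by (simp add: sum.inter_restrict)
    also have "UU \<inter> T = T" by (auto simp: T_def)
    finally show ?thesis .
  qed
  show ?thesis
  proof (intro exI[of _ T] conjI ballI)
    show "T \<subseteq> (\<Union>k\<in>K. U k)" by (auto simp: T_def UU_def)
  next
    fix k assume kK: "k \<in> K"
    have fUk: "finite (U k)" using fU kK by auto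
    have "real b = (\<Sum>t\<in>U k. x t)" using xpart kK by auto
    also have "\<dots> = (\<Sum>t\<in>U k. if t \<in> T then 1 else 0)"
      by (rule sum.cong) (use x01 UkUU[OF kK] in \<open>auto simp: T_def\<close>)
    also have "\<dots> = real (card {t\<in>U k. t \<in> T})" using fUk by (simp add: sum_ind_card)
    also have "{t\<in>U k. t \<in> T} = T \<inter> U k" by auto
    finally show "card (T \<inter> U k) = b" by simp
  next
    fix i assume "i \<in> I"
    then show "(\<Sum>t\<in>T. w i t) \<le> Bd + 4*\<delta>" using xw wT TS dpos by fastforce
  qed
qed

theorem mainTheorem5:
  fixes \<eta> :: real and b :: nat
  assumes "0 < \<eta>" and "\<eta> \<le> 1"
  shows "\<exists>a0::nat. \<forall>a::nat\<ge>a0. \<exists>\<nu>0::real>0. \<forall>\<nu>::real. 0 < \<nu> \<and> \<nu> \<le> \<nu>0 \<longrightarrow>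
    (\<exists>\<mu>0::real>0. \<forall>\<mu>::real. 0 < \<mu> \<and> \<mu> \<le> \<mu>0 \<longrightarrow>
      (\<exists>n0::nat. \<forall>n::nat\<ge>n0.
        \<forall>(m::nat) (C::nat \<Rightarrow> nat multiset).
          (\<forall>i\<in>{1..m}. \<nu> * real n \<le> real (size (C i)) \<and> size (C i) \<le> n) \<longrightarrow>
          (\<forall>t::nat. real (\<Sum>i\<in>{1..m}. count (C i) t) \<le> \<mu> * real n) \<longrightarrow>
          (\<forall>(l::nat) (U::nat \<Rightarrow> nat set).
            (\<forall>k\<in>{1..l}. \<forall>k'\<in>{1..l}. k \<noteq> k' \<longrightarrow> U k \<inter> U k' = {}) \<longrightarrow>
            (\<forall>k\<in>{1..l}. finite (U k) \<and> card (U k) = a) \<longrightarrow>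
            (\<exists>T. T \<subseteq> (\<Union>k\<in>{1..l}. U k) \<and>
               (\<forall>k\<in>{1..l}. b \<le> card (T \<inter> U k)) \<and>
               (\<forall>i\<in>{1..m}. real (size (mset_remove_set (C i) T))
                                 \<ge> (1 - \<eta>) * real (size (C i)))))))"
proof -
  define a0 :: nat where "a0 = nat \<lceil>2 * real b / \<eta>\<rceil> + b + 1"
  show ?thesis
  proof (rule exI[of _ a0], intro allI impI)
    fix a :: nat assume aa0: "a \<ge> a0"
    have apos: "a > 0" and ab: "b \<le> a" using aa0 by (auto simp: a0_def)
    have "2 * real b / \<eta> \<le> real a"
      using aa0 unfolding a0_def by linarith
    then have "2 * real b \<le> \<eta> * real a" using assms(1) by (simp add: divide_le_eq mult.commute)
    then have Ble: "real b / real a \<le> \<eta> / 2" using apos by (simp add: divide_le_eq field_simps)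
    show "\<exists>\<nu>0::real>0. \<forall>\<nu>::real. 0 < \<nu> \<and> \<nu> \<le> \<nu>0 \<longrightarrow>
    (\<exists>\<mu>0::real>0. \<forall>\<mu>::real. 0 < \<mu> \<and> \<mu> \<le> \<mu>0 \<longrightarrow>
      (\<exists>n0::nat. \<forall>n::nat\<ge>n0.
        \<forall>(m::nat) (C::nat \<Rightarrow> nat multiset).
          (\<forall>i\<in>{1..m}. \<nu> * real n \<le> real (size (C i)) \<and> size (C i) \<le> n) \<longrightarrow>
          (\<forall>t::nat. real (\<Sum>i\<in>{1..m}. count (C i) t) \<le> \<mu> * real n) \<longrightarrow>
          (\<forall>(l::nat) (U::nat \<Rightarrow> nat set).
            (\<forall>k\<in>{1..l}. \<forall>k'\<in>{1..l}. k \<noteq> k' \<longrightarrow> U k \<inter> U k' = {}) \<longrightarrow>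
            (\<forall>k\<in>{1..l}. finite (U k) \<and> card (U k) = a) \<longrightarrow>
            (\<exists>T. T \<subseteq> (\<Union>k\<in>{1..l}. U k) \<and>
               (\<forall>k\<in>{1..l}. b \<le> card (T \<inter> U k)) \<and>
               (\<forall>i\<in>{1..m}. real (size (mset_remove_set (C i) T))
                                 \<ge> (1 - \<eta>) * real (size (C i)))))))"
    proof (rule exI[of _ 1], intro conjI allI impI, simp)
      fix \<nu> :: real assume \<nu>: "0 < \<nu> \<and> \<nu> \<le> 1"
      show "\<exists>\<mu>0::real>0. \<forall>\<mu>::real. 0 < \<mu> \<and> \<mu> \<le> \<mu>0 \<longrightarrow>
      (\<exists>n0::nat. \<forall>n::nat\<ge>n0.
        \<forall>(m::nat) (C::nat \<Rightarrow> nat multiset).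
          (\<forall>i\<in>{1..m}. \<nu> * real n \<le> real (size (C i)) \<and> size (C i) \<le> n) \<longrightarrow>
          (\<forall>t::nat. real (\<Sum>i\<in>{1..m}. count (C i) t) \<le> \<mu> * real n) \<longrightarrow>
          (\<forall>(l::nat) (U::nat \<Rightarrow> nat set).
            (\<forall>k\<in>{1..l}. \<forall>k'\<in>{1..l}. k \<noteq> k' \<longrightarrow> U k \<inter> U k' = {}) \<longrightarrow>
            (\<forall>k\<in>{1..l}. finite (U k) \<and> card (U k) = a) \<longrightarrow>
            (\<exists>T. T \<subseteq> (\<Union>k\<in>{1..l}. U k) \<and>
               (\<forall>k\<in>{1..l}. b \<le> card (T \<inter> U k)) \<and>
               (\<forall>i\<in>{1..m}. real (size (mset_remove_set (C i) T))
                                 \<ge> (1 - \<eta>) * real (size (C i))))))"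
      proof (rule exI[of _ "\<eta> * \<nu> / 8"], intro conjI allI impI)
        show "0 < \<eta> * \<nu> / 8" using assms \<nu> by simp
        fix \<mu> :: real assume \<mu>: "0 < \<mu> \<and> \<mu> \<le> \<eta> * \<nu> / 8"
        define \<delta> where "\<delta> = \<mu> / \<nu>"
        have dpos: "\<delta> > 0" using \<mu> \<nu> by (simp add: \<delta>_def)
        have dle: "4 * \<delta> \<le> \<eta> / 2" using \<mu> \<nu> by (simp add: \<delta>_def divide_le_eq field_simps)
        show "\<exists>n0::nat. \<forall>n::nat\<ge>n0.
        \<forall>(m::nat) (C::nat \<Rightarrow> nat multiset).
          (\<forall>i\<in>{1..m}. \<nu> * real n \<le> real (size (C i)) \<and> size (C i) \<le> n) \<longrightarrow>
          (\<forall>t::nat. real (\<Sum>i\<in>{1..m}. count (C i) t) \<le> \<mu> * real n) \<longrightarrow>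
          (\<forall>(l::nat) (U::nat \<Rightarrow> nat set).
            (\<forall>k\<in>{1..l}. \<forall>k'\<in>{1..l}. k \<noteq> k' \<longrightarrow> U k \<inter> U k' = {}) \<longrightarrow>
            (\<forall>k\<in>{1..l}. finite (U k) \<and> card (U k) = a) \<longrightarrow>
            (\<exists>T. T \<subseteq> (\<Union>k\<in>{1..l}. U k) \<and>
               (\<forall>k\<in>{1..l}. b \<le> card (T \<inter> U k)) \<and>
               (\<forall>i\<in>{1..m}. real (size (mset_remove_set (C i) T))
                                 \<ge> (1 - \<eta>) * real (size (C i)))))"
        proof (rule exI[of _ 1], intro allI impI)
          fix n m :: nat and C :: "nat \<Rightarrow> nat multiset" and l :: nat and U :: "nat \<Rightarrow> nat set"
          assume n1: "1 \<le> n"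
            and S1: "\<forall>i\<in>{1..m}. \<nu> * real n \<le> real (size (C i)) \<and> size (C i) \<le> n"
            and S2: "\<forall>t::nat. real (\<Sum>i\<in>{1..m}. count (C i) t) \<le> \<mu> * real n"
            and disj: "\<forall>k\<in>{1..l}. \<forall>k'\<in>{1..l}. k \<noteq> k' \<longrightarrow> U k \<inter> U k' = {}"
            and Uk: "\<forall>k\<in>{1..l}. finite (U k) \<and> card (U k) = a"
          define UU where "UU = (\<Union>k\<in>{1..l}. U k)"
          have fUU: "finite UU" using Uk by (auto simp: UU_def)
          define w where "w i t = real (count (C i) t) / real (size (C i))" for i t
          define x0 where "x0 t = (if t \<in> UU then real b / real a else 0)" for t
          have npos: "\<nu> * real n > 0" using n1 \<nu> by simp
          have szpos: "real (size (C i)) > 0" if "i \<in> {1..m}" for i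
            using S1 that npos by fastforce
          have wnn: "\<forall>i t. 0 \<le> w i t" by (simp add: w_def)
          have wsum: "\<forall>t. (\<Sum>i\<in>{1..m}. w i t) \<le> \<delta>"
          proof
            fix t
            have "(\<Sum>i\<in>{1..m}. w i t) \<le> (\<Sum>i\<in>{1..m}. real (count (C i) t) / (\<nu> * real n))"
              unfolding w_def using S1 npos szpos by (intro sum_mono divide_left_mono) (auto intro: mult_pos_pos)
            also have "\<dots> = real (\<Sum>i\<in>{1..m}. count (C i) t) / (\<nu> * real n)"
              by (simp add: sum_divide_distrib)
            also have "\<dots> \<le> \<mu> * real n / (\<nu> * real n)"
              using S2 npos by (intro divide_right_mono) auto
            also have "\<dots> = \<delta>" using n1 by (simp add: \<delta>_def)
            finally show "(\<Sum>i\<in>{1..m}. w i t) \<le> \<delta>" .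
          qed
          have x0part: "\<forall>k\<in>{1..l}. (\<Sum>t\<in>U k. x0 t) = real b"
          proof
            fix k assume k: "k \<in> {1..l}"
            have "(\<Sum>t\<in>U k. x0 t) = (\<Sum>t\<in>U k. real b / real a)"
              using k by (intro sum.cong) (auto simp: x0_def UU_def)
            also have "\<dots> = real b" using Uk k apos by simp
            finally show "(\<Sum>t\<in>U k. x0 t) = real b" .
          qed
          have x0w: "\<forall>i\<in>{1..m}. (\<Sum>t\<in>(\<Union>k\<in>{1..l}. U k). w i t * x0 t) \<le> real b / real a"
          proof
            fix i assume i: "i \<in> {1..m}"
            have "(\<Sum>t\<in>UU. w i t * x0 t) = real b / real a * (real (\<Sum>t\<in>UU. count (C i) t) / real (size (C i)))"
              by (simp add: x0_def w_def sum_distrib_left sum_divide_distrib, rule sum.cong, auto simp: field_simps)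
            also have "\<dots> \<le> real b / real a * 1"
            proof (intro mult_left_mono)
              have "real (\<Sum>t\<in>UU. count (C i) t) \<le> real (size (C i))"
                using sum_count_le_size[OF fUU, of "C i"] by (simp only: of_nat_le_iff)
              then show "real (\<Sum>t\<in>UU. count (C i) t) / real (size (C i)) \<le> 1"
                using szpos[OF i] by simp
            qed simp
            finally show "(\<Sum>t\<in>(\<Union>k\<in>{1..l}. U k). w i t * x0 t) \<le> real b / real a"
              by (simp add: UU_def)
          qed
          obtain T where TU: "T \<subseteq> (\<Union>k\<in>{1..l}. U k)"
            and Tk: "\<forall>k\<in>{1..l}. card (T \<inter> U k) = b"
            and Tw: "\<forall>i\<in>{1..m}. (\<Sum>t\<in>T. w i t) \<le> real b / real a + 4*\<delta>"
          proof -
            have x0b: "\<forall>t. 0 \<le> x0 t \<and> x0 t \<le> 1" using ab apos by (simp add: x0_def)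
            have x0s: "\<forall>t. t \<notin> (\<Union>k\<in>{1..l}. U k) \<longrightarrow> x0 t = 0" by (simp add: x0_def UU_def)
            have fK: "finite {1..l}" and fI: "finite {1..m}" and fU: "\<forall>k\<in>{1..l}. finite (U k)"
              using Uk by auto
            from rounding[OF fK fI fU disj wnn wsum dpos x0s x0b x0part x0w] that show ?thesis by blast
          qed
          have fT: "finite T" using TU fUU by (simp add: UU_def finite_subset)
          show "\<exists>T. T \<subseteq> (\<Union>k\<in>{1..l}. U k) \<and>
               (\<forall>k\<in>{1..l}. b \<le> card (T \<inter> U k)) \<and>
               (\<forall>i\<in>{1..m}. real (size (mset_remove_set (C i) T))
                                 \<ge> (1 - \<eta>) * real (size (C i)))"
          proof (intro exI[of _ T] conjI ballI)
            show "T \<subseteq> (\<Union>k\<in>{1..l}. U k)" by (rule TU)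
          next
            fix k assume "k \<in> {1..l}" then show "b \<le> card (T \<inter> U k)" using Tk by simp
          next
            fix i assume i: "i \<in> {1..m}"
            have "(\<Sum>t\<in>T. w i t) \<le> \<eta>" proof -
              have "(\<Sum>t\<in>T. w i t) \<le> real b / real a + 4*\<delta>" using Tw i by blast
              then show ?thesis using Ble dle by linarith
            qed
            then have "real (\<Sum>t\<in>T. count (C i) t) / real (size (C i)) \<le> \<eta>"
              by (simp add: w_def sum_divide_distrib)
            then have le: "real (\<Sum>t\<in>T. count (C i) t) \<le> \<eta> * real (size (C i))"
              using szpos[OF i] by (simp add: divide_le_eq)
            have "size (mset_remove_set (C i) T) + (\<Sum>t\<in>T. count (C i) t) = size (C i)"
              using size_remove[OF fT] by (simp add: mset_remove_set_def)
            then have "real (size (mset_remove_set (C i) T)) = real (size (C i)) - real (\<Sum>t\<in>T. count (C i) t)"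
              by (metis add_diff_cancel_right' of_nat_add diff_add_cancel)
            then show "real (size (mset_remove_set (C i) T)) \<ge> (1 - \<eta>) * real (size (C i))"
              using le by (simp add: algebra_simps)
          qed
        qed
      qed
    qed
  qed
qed

end
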